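(* Let $\mathbb{F}$ be an algebraically closed field of characteristic $2$. Let $(V,[\cdot,\cdot]_{V},\alpha_{V},B_{V})$ be an involutive quadratic Hom-Lie algebra over $\mathbb{F}$, let $\mathscr{D}\in\mathrm{Der}_{\alpha_{V}}(V)$ be such that $B_{V}$ is $\mathscr{D}$-invariant, and let $L=\mathbb{F}e^{*}\oplus V\oplus\mathbb{F}e$ (a vector space with two new basis vectors $e^*,e$). (1) Suppose there exist $x_{0}\in V$ and $\lambda\in\mathbb{F}$ such that $\lambda\mathscr{D}+\mathrm{ad}_{V}(x_{0})=\mathscr{D}$, $\alpha_{V}(\mathscr{D}(x_{0}))=\mathscr{D}(x_{0})$, and $\alpha_{V}\circ\mathscr{D}^{2}+\mathscr{D}^{2}\circ\alpha_{V}=\mathrm{ad}_{V}(\mathscr{D}(x_{0}))$, where $\mathrm{ad}_V(x)=[x,\cdot]_V$. Let $\lambda_0\in\mathbb{F}$ and $\beta\in\mathbb{F}$ be arbitrary. Define the bilinear alternating bracket on $L$ by $[x,y]=[x,y]_{V}+B_{V}(\mathscr{D}(x),y)e$, $[e^{*},x]=[x,e^*]=\mathscr{D}(x)$ for $x,y\in V$, $[e^*,e^*]=0$, and $[e,z]=[z,e]=0$ for all $z\in L$; define the linear map $\alpha:L\to L$ by $\alpha(x)=\alpha_{V}(x)+B_{V}(x_{0},x)e$ for $x\in V$, $\alpha(e^{*})=\lambda e^{*}+x_{0}+\lambda_{0}e$, $\alpha(e)=\lambda e$; and define the symmetric bilinear form $B$ on $L$ by $B(x,y)=B_{V}(x,y)$,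 $B(x,e^{*})=B(x,e)=0$ for $x,y\in V$, $B(e^{*},e)=1$, $B(e,e)=0$, $B(e^*,e^* )=\beta$. Then $(L,[\cdot,\cdot],\alpha,B)$ is a multiplicative quadratic Hom-Lie algebra. (2) The map $\alpha$ is invertible if and only if $\lambda\neq0$. Moreover, $\alpha$ is an involution if and only if $\lambda^{2}=1$, $\alpha_{V}(x_{0})=\lambda x_{0}$ and $B_{V}(x_{0},x_{0})=0$.
   Context: A Hom-Lie algebra $(\mathfrak g,[\cdot,\cdot],\alpha)$ over $\mathbb{F}$ (characteristic 2) is a vector space $\mathfrak g$ with a linear map $\alpha$ and a bilinear bracket satisfying $[x,x]=0$, the Hom-Jacobi identity $[\alpha(x),[y,z]]+[\alpha(y),[z,x]]+[\alpha(z),[x,y]]=0$, and $\alpha([x,y])=[\alpha(x),\alpha(y)]$ (multiplicativity) for all $x,y,z$. It is involutive if $\alpha^2=\mathrm{id}$. A quadratic Hom-Lie algebra $(\mathfrak g,[\cdot,\cdot],\alpha,B)$ is a Hom-Lie algebra with a symmetric nondegenerate bilinear form $B$ satisfying $B([x,y],z)=B(x,[y,z])$ and $B(\alpha(x),y)=B(x,\alpha(y))$ for all $x,y,z$. An $\alpha_V$-derivation of $(V,[\cdot,\cdot]_V,\alpha_V)$ is a linear map $\mathscr{D}:V\to V$ with $\mathscr{D}\circ\alpha_V=\alpha_V\circ\mathscr{D}$ and $\mathscr{D}([x,y]_V)=[\mathscr{D}(x),\alpha_V(y)]_V+[\alpha_V(x),\mathscr{D}(y)]_V$; $\mathrm{Der}_{\alpha_V}(V)$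 is the set of these. In characteristic 2, $B_V$ is called $\mathscr{D}$-invariant if $B_V(x,\mathscr{D}(x))=0$ for all $x\in V$. *)

theory Defs
  imports Main "HOL-Library.Product_Plus" "HOL-Computational_Algebra.Polynomial"
begin

definition alg_closed :: "'a::field itself \<Rightarrow> bool" where
  "alg_closed _ \<longleftrightarrow> (\<forall>p::'a poly. degree p > 0 \<longrightarrow> (\<exists>x. poly p x = 0))"

definition char2 :: "'a::field itself \<Rightarrow> bool" where
  "char2 _ \<longleftrightarrow> (1::'a) + 1 = 0"

definition bilinear_map ::
  "('a::field \<Rightarrow> 'v::ab_group_add \<Rightarrow> 'v) \<Rightarrow> ('v \<Rightarrow> 'v \<Rightarrow> 'v) \<Rightarrow> bool" where
  "bilinear_map s br \<longleftrightarrow> (\<forall>x. Vector_Spaces.linear s s (br x)) \<and>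
                          (\<forall>y. Vector_Spaces.linear s s (\<lambda>x. br x y))"

definition bilinear_form ::
  "('a::field \<Rightarrow> 'v::ab_group_add \<Rightarrow> 'v) \<Rightarrow> ('v \<Rightarrow> 'v \<Rightarrow> 'a) \<Rightarrow> bool" where
  "bilinear_form s B \<longleftrightarrow> (\<forall>x. Vector_Spaces.linear s (*) (B x)) \<and>
                         (\<forall>y. Vector_Spaces.linear s (*) (\<lambda>x. B x y))"

text \<open>Hom-Lie algebra (the context's definition includes multiplicativity).\<close>
definition hom_lie ::
  "('a::field \<Rightarrow> 'v::ab_group_add \<Rightarrow> 'v) \<Rightarrow> ('v \<Rightarrow> 'v \<Rightarrow> 'v) \<Rightarrow> ('v \<Rightarrow> 'v) \<Rightarrow> bool" where
  "hom_lie s br al \<longleftrightarrow>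
     vector_space s \<and> bilinear_map s br \<and> Vector_Spaces.linear s s al \<and>
     (\<forall>x. br x x = 0) \<and>
     (\<forall>x y z. br (al x) (br y z) + br (al y) (br z x) + br (al z) (br x y) = 0) \<and>
     (\<forall>x y. al (br x y) = br (al x) (al y))"

definition quadratic_hom_lie ::
  "('a::field \<Rightarrow> 'v::ab_group_add \<Rightarrow> 'v) \<Rightarrow> ('v \<Rightarrow> 'v \<Rightarrow> 'v) \<Rightarrow> ('v \<Rightarrow> 'v) \<Rightarrow> ('v \<Rightarrow> 'v \<Rightarrow> 'a) \<Rightarrow> bool" where
  "quadratic_hom_lie s br al B \<longleftrightarrow>
     hom_lie s br al \<and> bilinear_form s B \<and>
     (\<forall>x y. B x y = B y x) \<and>
     (\<forall>x. (\<forall>y. B x y = 0) \<longrightarrow> x = 0) \<and>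
     (\<forall>x y z. B (br x y) z = B x (br y z)) \<and>
     (\<forall>x y. B (al x) y = B x (al y))"

definition involutive :: "('v \<Rightarrow> 'v) \<Rightarrow> bool" where
  "involutive al \<longleftrightarrow> al \<circ> al = id"

definition hom_derivation ::
  "('a::field \<Rightarrow> 'v::ab_group_add \<Rightarrow> 'v) \<Rightarrow> ('v \<Rightarrow> 'v \<Rightarrow> 'v) \<Rightarrow> ('v \<Rightarrow> 'v) \<Rightarrow> ('v \<Rightarrow> 'v) \<Rightarrow> bool" where
  "hom_derivation s br al D \<longleftrightarrow>
     Vector_Spaces.linear s s D \<and> D \<circ> al = al \<circ> D \<and>
     (\<forall>x y. D (br x y) = br (D x) (al y) + br (al x) (D y))"

definition D_invariant :: "('v \<Rightarrow> 'v \<Rightarrow> 'a::zero) \<Rightarrow> ('v \<Rightarrow> 'v) \<Rightarrow> bool" where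
  "D_invariant B D \<longleftrightarrow> (\<forall>x. B x (D x) = 0)"

definition ad :: "('v \<Rightarrow> 'v \<Rightarrow> 'v) \<Rightarrow> 'v \<Rightarrow> 'v \<Rightarrow> 'v" where
  "ad br x = br x"

text \<open>The extension $L = \mathbb{F}e^* \oplus V \oplus \mathbb{F}e$, represented as triples
  (a, x, b) meaning a e* + x + b e.\<close>

definition scaleL :: "('a::field \<Rightarrow> 'v \<Rightarrow> 'v) \<Rightarrow> 'a \<Rightarrow> 'a \<times> 'v \<times> 'a \<Rightarrow> 'a \<times> 'v \<times> 'a" where
  "scaleL s c = (\<lambda>(a, x, b). (c * a, s c x, c * b))"

definition bracketL ::
  "('a::field \<Rightarrow> 'v::ab_group_add \<Rightarrow> 'v) \<Rightarrow> ('v \<Rightarrow> 'v \<Rightarrow> 'v) \<Rightarrow> ('v \<Rightarrow> 'v \<Rightarrow> 'a) \<Rightarrow> ('v \<Rightarrow> 'v)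
   \<Rightarrow> 'a \<times> 'v \<times> 'a \<Rightarrow> 'a \<times> 'v \<times> 'a \<Rightarrow> 'a \<times> 'v \<times> 'a" where
  "bracketL s br B D = (\<lambda>(a, x, b) (c, y, d).
      (0, br x y + s a (D y) + s c (D x), B (D x) y))"

definition alphaL ::
  "('a::field \<Rightarrow> 'v::ab_group_add \<Rightarrow> 'v) \<Rightarrow> ('v \<Rightarrow> 'v) \<Rightarrow> ('v \<Rightarrow> 'v \<Rightarrow> 'a) \<Rightarrow> 'v \<Rightarrow> 'a \<Rightarrow> 'a
   \<Rightarrow> 'a \<times> 'v \<times> 'a \<Rightarrow> 'a \<times> 'v \<times> 'a" where
  "alphaL s al B x0 lam lam0 = (\<lambda>(a, x, b).
      (a * lam, al x + s a x0, B x0 x + a * lam0 + b * lam))"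

definition formL ::
  "('v \<Rightarrow> 'v \<Rightarrow> 'a::field) \<Rightarrow> 'a \<Rightarrow> 'a \<times> 'v \<times> 'a \<Rightarrow> 'a \<times> 'v \<times> 'a \<Rightarrow> 'a" where
  "formL B beta = (\<lambda>(a, x, b) (c, y, d). B x y + a * d + b * c + beta * a * c)"

end

theory Submission
  imports Defs
begin

lemma linear_mk:
  assumes "vector_space s1" "vector_space s2"
    and "\<And>x y. f (x + y) = f x + f y" and "\<And>r x. f (s1 r x) = s2 r (f x)"
  shows "Vector_Spaces.linear s1 s2 f"
  using assms unfolding linear_iff_module_hom module_hom_def module_hom_axioms_def
    module_iff_vector_space by auto

lemma linear_add: "Vector_Spaces.linear s1 s2 f \<Longrightarrow> f (x + y) = f x + f y"
  by (simp add: linear_iff_module_hom module_hom.add)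

lemma linear_scale: "Vector_Spaces.linear s1 s2 f \<Longrightarrow> f (s1 r x) = s2 r (f x)"
  by (simp add: linear_iff_module_hom module_hom.scale)

lemma vs_self: "vector_space ((*) :: 'a::field \<Rightarrow> 'a \<Rightarrow> 'a)"
  unfolding vector_space_def by (simp add: algebra_simps)

locale hsetup =
  fixes s :: "'a::field \<Rightarrow> 'v::ab_group_add \<Rightarrow> 'v"
    and br :: "'v \<Rightarrow> 'v \<Rightarrow> 'v" and al :: "'v \<Rightarrow> 'v"
    and BV :: "'v \<Rightarrow> 'v \<Rightarrow> 'a" and D :: "'v \<Rightarrow> 'v"
    and x0 :: 'v and lam :: 'a
  assumes c2: "char2 TYPE('a)"
    and q: "quadratic_hom_lie s br al BV" and inv: "involutive al"
    and hd: "hom_derivation s br al D" and dinv: "D_invariant BV D"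
    and H1: "\<forall>y. s lam (D y) + ad br x0 y = D y"
    and H2: "al (D x0) = D x0"
    and H3: "\<forall>y. al (D (D y)) + D (D (al y)) = ad br (D x0) y"
begin

lemma vs: "vector_space s" using q unfolding quadratic_hom_lie_def hom_lie_def by auto

lemma sa1: "s c (x + y) = s c x + s c y" using vs unfolding vector_space_def by auto
lemma sa2: "s (a + b) x = s a x + s b x" using vs unfolding vector_space_def by auto
lemma sm: "s a (s b x) = s (a * b) x" using vs unfolding vector_space_def by auto
lemma s1: "s 1 x = x" using vs unfolding vector_space_def by auto

lemma s0: "s 0 x = 0"
  using sa2[of 0 0 x] by simp
lemma sz: "s c 0 = 0"
  using sa1[of c 0 0] by simp

lemma a2: "(a::'a) + a = 0"
proof -
  have "a + a = a * (1 + 1)" by (simp add: algebra_simps)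
  then show ?thesis using c2 unfolding char2_def by simp
qed
lemma a2': "(a::'a) + (a + b) = b"
  by (metis a2 add.assoc add_0)
lemma aneg: "- (a::'a) = a"
  using a2[of a] by (metis add_eq_0_iff)

lemma v2: "(x::'v) + x = 0"
proof -
  have "x + x = s (1 + 1) x" by (simp only: sa2 s1)
  then show ?thesis using c2 unfolding char2_def by (simp add: s0)
qed
lemma v2': "(x::'v) + (x + y) = y"
  by (metis v2 add.assoc add_0)
lemma vneg: "- (x::'v) = x"
  using v2[of x] by (metis add_eq_0_iff)

lemma bm: "bilinear_map s br" using q unfolding quadratic_hom_lie_def hom_lie_def by auto
lemma bra1: "br (x + y) z = br x z + br y z"
  using bm unfolding bilinear_map_def by (auto intro: linear_add)
lemma bra2: "br x (y + z) = br x y + br x z"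
  using bm unfolding bilinear_map_def by (auto intro: linear_add)
lemma brs1: "br (s c x) y = s c (br x y)"
  using bm unfolding bilinear_map_def by (auto intro: linear_scale)
lemma brs2: "br x (s c y) = s c (br x y)"
  using bm unfolding bilinear_map_def by (auto intro: linear_scale)

lemma bf: "bilinear_form s BV" using q unfolding quadratic_hom_lie_def by auto
lemma Ba1: "BV (x + y) z = BV x z + BV y z"
  using bf unfolding bilinear_form_def by (auto intro: linear_add)
lemma Ba2: "BV x (y + z) = BV x y + BV x z"
  using bf unfolding bilinear_form_def by (auto intro: linear_add)
lemma Bs1: "BV (s c x) y = c * BV x y"
  using bf unfolding bilinear_form_def by (auto intro: linear_scale)
lemma Bs2: "BV x (s c y) = c * BV x y"
  using bf unfolding bilinear_form_def by (auto intro: linear_scale)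

lemma all: "Vector_Spaces.linear s s al" using q unfolding quadratic_hom_lie_def hom_lie_def by auto
lemma ala: "al (x + y) = al x + al y" using all by (rule linear_add)
lemma als: "al (s c x) = s c (al x)" using all by (rule linear_scale)
lemma Dl: "Vector_Spaces.linear s s D" using hd unfolding hom_derivation_def by auto
lemma Da: "D (x + y) = D x + D y" using Dl by (rule linear_add)
lemma Ds: "D (s c x) = s c (D x)" using Dl by (rule linear_scale)

lemma br0: "br 0 y = 0" using brs1[of 0 0 y] by (simp add: s0)
lemma br0': "br y 0 = 0" using brs2[of y 0 0] by (simp add: s0)
lemma B0: "BV 0 y = 0" using Bs1[of 0 0 y] by (simp add: s0)
lemma B0': "BV y 0 = 0" using Bs2[of y 0 0] by (simp add: s0)
lemma al0: "al 0 = 0" using als[of 0 0] by (simp add: s0)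
lemma D0: "D 0 = 0" using Ds[of 0 0] by (simp add: s0)

lemma alt: "br x x = 0" using q unfolding quadratic_hom_lie_def hom_lie_def by auto
lemma jac: "br (al x) (br y z) + br (al y) (br z x) + br (al z) (br x y) = 0"
  using q unfolding quadratic_hom_lie_def hom_lie_def by auto
lemma mult: "al (br x y) = br (al x) (al y)"
  using q unfolding quadratic_hom_lie_def hom_lie_def by auto
lemma symB: "BV x y = BV y x" using q unfolding quadratic_hom_lie_def by auto
lemma nondeg: "(\<forall>y. BV x y = 0) \<Longrightarrow> x = 0" using q unfolding quadratic_hom_lie_def by auto
lemma invB: "BV (br x y) z = BV x (br y z)" using q unfolding quadratic_hom_lie_def by auto
lemma alB: "BV (al x) y = BV x (al y)" using q unfolding quadratic_hom_lie_def by auto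
lemma alal: "al (al x) = x" using inv unfolding involutive_def by (metis comp_apply id_apply)
lemma Dal: "D (al x) = al (D x)" using hd unfolding hom_derivation_def by (metis comp_apply)
lemma der: "D (br x y) = br (D x) (al y) + br (al x) (D y)"
  using hd unfolding hom_derivation_def by auto
lemma Dinv: "BV x (D x) = 0" using dinv unfolding D_invariant_def by auto

lemma brsym: "br x y = br y x"
proof -
  have "br (x + y) (x + y) = br x x + br x y + (br y x + br y y)" by (simp only: bra1 bra2 add_ac)
  hence "br x y + br y x = 0" using alt[of "x + y"] alt[of x] alt[of y] by simp
  thus ?thesis by (metis add_eq_0_iff vneg)
qed

lemma Dskew: "BV (D x) y = BV x (D y)"
proof -
  have "BV (x + y) (D (x + y)) = 0" by (rule Dinv)
  hence "BV x (D y) + BV y (D x) = 0" by (simp add: Da Ba1 Ba2 Dinv add.commute)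
  thus ?thesis by (metis add_eq_0_iff aneg symB)
qed

lemma H1a: "br x0 p = D p + s lam (D p)"
proof -
  have "s lam (D p) + br x0 p = D p" using H1 unfolding ad_def by auto
  thus ?thesis by (metis add_diff_cancel_left' diff_add_cancel add.commute v2' )
qed
lemma H1b: "br p x0 = D p + s lam (D p)" using H1a brsym by metis

lemma brDx0: "br (D x0) y = 0"
proof -
  have "al (D (D y)) + D (D (al y)) = br (D x0) y" using H3 unfolding ad_def by auto
  thus ?thesis by (simp add: Dal v2)
qed
lemma brDx0': "br y (D x0) = 0" using brDx0 brsym by metis

lemma sDx0: "s lam (D x0) = D x0"
proof -
  have "D x0 + s lam (D x0) = 0" using H1a[of x0] alt[of x0] by simp
  thus ?thesis by (metis add_eq_0_iff vneg)
qed

lemma lamcase: "D x0 = 0 \<or> lam = 1"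
proof (rule disjCI)
  assume "lam \<noteq> 1"
  hence nz: "lam - 1 \<noteq> 0" by simp
  have "s (lam - 1) (D x0) = s lam (D x0) + s (- 1) (D x0)"
    by (metis sa2 diff_conv_add_uminus)
  also have "... = s (1 + - 1) (D x0)" by (simp only: sDx0 sa2 s1)
  finally have z: "s (lam - 1) (D x0) = 0" by (simp add: s0)
  have "D x0 = s (inverse (lam - 1) * (lam - 1)) (D x0)" using nz by (simp add: s1)
  also have "... = 0" by (simp only: sm[symmetric] z sz)
  finally show "D x0 = 0" .
qed

lemmas lin = sa1 sa2 sm s1 s0 sz bra1 bra2 brs1 brs2 Ba1 Ba2 Bs1 Bs2 ala als Da Ds
  br0 br0' B0 B0' al0 D0
lemmas c2s = a2 a2' v2 v2' aneg vneg

lemma brswap: "br (D p) (al q) = br (al q) (D p)" by (rule brsym)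

lemma JV: "br (al x + s a x0) (br y z + s c (D z) + s e (D y)) + s (a*lam) (D (br y z + s c (D z) + s e (D y)))
  + (br (al y + s c x0) (br z x + s e (D x) + s a (D z)) + s (c*lam) (D (br z x + s e (D x) + s a (D z))))
  + (br (al z + s e x0) (br x y + s a (D y) + s c (D x)) + s (e*lam) (D (br x y + s a (D y) + s c (D x)))) = 0"
proof -
  have "br (al x + s a x0) (br y z + s c (D z) + s e (D y)) + s (a*lam) (D (br y z + s c (D z) + s e (D y)))
  + (br (al y + s c x0) (br z x + s e (D x) + s a (D z)) + s (c*lam) (D (br z x + s e (D x) + s a (D z))))
  + (br (al z + s e x0) (br x y + s a (D y) + s c (D x)) + s (e*lam) (D (br x y + s a (D y) + s c (D x))))
   = br (al x) (br y z) + br (al y) (br z x) + br (al z) (br x y)"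
    by (simp add: lin der Dal H1a brswap add_ac mult_ac c2s)
  thus ?thesis using jac by simp
qed

lemma cyc: "BV p (br q r) = BV r (br p q)"
  by (metis invB symB)

lemma S0: "BV (al (D x)) (br y z) + BV (al (D y)) (br z x) + BV (al (D z)) (br x y) = 0"
proof -
  have e: "BV (al (D x)) (br y z) = BV (al x) (br (D y) (al z)) + BV (al x) (br (al y) (D z))"
    for x y z
    by (metis Dal Dskew der Ba2)
  have p: "BV (al x) (br (D y) (al z)) = BV (al z) (br (al x) (D y))" for x y z
    by (rule cyc)
  show ?thesis unfolding e p by (simp add: add_ac c2s)
qed

lemma JE: "BV (D (al x + s a x0)) (br y z + s c (D z) + s e (D y))
  + BV (D (al y + s c x0)) (br z x + s e (D x) + s a (D z))
  + BV (D (al z + s e x0)) (br x y + s a (D y) + s c (D x)) = 0"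
proof -
  have P: "BV (al (D x)) (D z) = BV (al (D z)) (D x)" for x z
    by (metis alB symB)
  have Q: "BV (D x0) (br y z) = 0" for y z
    by (metis invB brDx0 B0)
  have "BV (D (al x + s a x0)) (br y z + s c (D z) + s e (D y))
  + BV (D (al y + s c x0)) (br z x + s e (D x) + s a (D z))
  + BV (D (al z + s e x0)) (br x y + s a (D y) + s c (D x))
   = BV (al (D x)) (br y z) + BV (al (D y)) (br z x) + BV (al (D z)) (br x y)"
    by (simp add: lin Dal Q P add_ac mult_ac c2s distrib_left)
  thus ?thesis using S0 by simp
qed

lemma MV: "al (br x y + s a (D y) + s c (D x)) = br (al x + s a x0) (al y + s c x0)
   + s (a*lam) (D (al y + s c x0)) + s (c*lam) (D (al x + s a x0))"
  using lamcase by (elim disjE) (simp_all add: lin mult Dal H1a H1b sDx0 alt add_ac mult_ac c2s)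

lemma ME: "BV x0 (br x y + s a (D y) + s c (D x)) + BV (D x) y * lam
   = BV (D (al x + s a x0)) (al y + s c x0)"
proof -
  have E1: "BV (al (D x)) (al y) = BV (D x) y" by (metis alB alal)
  have E2: "BV x0 (br x y) = BV (D x) y + lam * BV (D x) y"
    by (metis invB H1a Ba1 Bs1)
  have E3: "BV (D x0) (al y) = BV x0 (D y)" by (metis alB H2 Dskew)
  have E4: "BV (al (D x)) x0 = BV x0 (D x)" by (metis alB Dal H2 Dskew symB)
  have E5: "BV (D x0) x0 = 0" by (metis Dinv symB)
  show ?thesis by (simp add: lin Dal E1 E2 E3 E4 E5 add_ac mult_ac c2s)
qed

lemma vsL: "vector_space (scaleL s)"
  unfolding vector_space_def scaleL_def by (simp add: split_beta lin algebra_simps)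

lemma bmL: "bilinear_map (scaleL s) (bracketL s br BV D)"
  unfolding bilinear_map_def
  by (auto intro!: linear_mk vsL simp: bracketL_def scaleL_def split_beta lin algebra_simps)

lemma linL: "Vector_Spaces.linear (scaleL s) (scaleL s) (alphaL s al BV x0 lam lam0)"
  by (auto intro!: linear_mk vsL simp: alphaL_def scaleL_def split_beta lin algebra_simps)

lemma bfL: "bilinear_form (scaleL s) (formL BV beta)"
  unfolding bilinear_form_def
  by (auto intro!: linear_mk vsL vs_self simp: formL_def scaleL_def split_beta lin algebra_simps)

lemma altL: "bracketL s br BV D X X = 0"
  by (cases X) (simp add: bracketL_def zero_prod_def alt Dskew Dinv v2)

lemma jacL: "bracketL s br BV D (alphaL s al BV x0 lam lam0 X) (bracketL s br BV D Y Z)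
   + bracketL s br BV D (alphaL s al BV x0 lam lam0 Y) (bracketL s br BV D Z X)
   + bracketL s br BV D (alphaL s al BV x0 lam lam0 Z) (bracketL s br BV D X Y) = 0"
proof -
  obtain a x b where X: "X = (a, x, b)" by (cases X) auto
  obtain c y d where Y: "Y = (c, y, d)" by (cases Y) auto
  obtain e z f where Z: "Z = (e, z, f)" by (cases Z) auto
  show ?thesis using JV[of x a y z c e] JE[of x a y z c e]
    by (simp add: X Y Z bracketL_def alphaL_def zero_prod_def s0 D0 add.assoc mult.commute)
qed

lemma multL: "alphaL s al BV x0 lam lam0 (bracketL s br BV D X Y)
   = bracketL s br BV D (alphaL s al BV x0 lam lam0 X) (alphaL s al BV x0 lam lam0 Y)"
proof -
  obtain a x b where X: "X = (a, x, b)" by (cases X) auto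
  obtain c y d where Y: "Y = (c, y, d)" by (cases Y) auto
  show ?thesis using MV[of x y a c] ME[of x y a c]
    by (simp add: X Y bracketL_def alphaL_def s0 mult.commute)
qed

lemma qL: "quadratic_hom_lie (scaleL s) (bracketL s br BV D) (alphaL s al BV x0 lam lam0) (formL BV beta)"
  unfolding quadratic_hom_lie_def hom_lie_def
proof (intro conjI allI impI)
  show "vector_space (scaleL s)" by (rule vsL)
  show "bilinear_map (scaleL s) (bracketL s br BV D)" by (rule bmL)
  show "Vector_Spaces.linear (scaleL s) (scaleL s) (alphaL s al BV x0 lam lam0)" by (rule linL)
  show "bilinear_form (scaleL s) (formL BV beta)" by (rule bfL)
  show "bracketL s br BV D X X = 0" for X by (rule altL)
  show "bracketL s br BV D (alphaL s al BV x0 lam lam0 X) (bracketL s br BV D Y Z)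
   + bracketL s br BV D (alphaL s al BV x0 lam lam0 Y) (bracketL s br BV D Z X)
   + bracketL s br BV D (alphaL s al BV x0 lam lam0 Z) (bracketL s br BV D X Y) = 0" for X Y Z
    by (rule jacL)
  show "alphaL s al BV x0 lam lam0 (bracketL s br BV D X Y)
   = bracketL s br BV D (alphaL s al BV x0 lam lam0 X) (alphaL s al BV x0 lam lam0 Y)" for X Y
    by (rule multL)
  show "formL BV beta X Y = formL BV beta Y X" for X Y
    by (cases X; cases Y) (simp add: formL_def symB algebra_simps)
  show "formL BV beta (bracketL s br BV D X Y) Z = formL BV beta X (bracketL s br BV D Y Z)" for X Y Z
    by (cases X; cases Y; cases Z) (simp add: formL_def bracketL_def lin invB Dskew algebra_simps)
  show "formL BV beta (alphaL s al BV x0 lam lam0 X) Y = formL BV beta X (alphaL s al BV x0 lam lam0 Y)" for X Y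
  proof -
    obtain a x b where X: "X = (a, x, b)" by (cases X) auto
    obtain c y d where Y: "Y = (c, y, d)" by (cases Y) auto
    show ?thesis by (simp add: X Y formL_def alphaL_def lin alB symB[of x x0] algebra_simps)
  qed
  show "X = 0" if h: "\<forall>Y. formL BV beta X Y = 0" for X
  proof -
    obtain a x b where X: "X = (a, x, b)" by (cases X) auto
    have "a = 0" using h[rule_format, of "(0, 0, 1)"] by (simp add: X formL_def B0')
    moreover have "b = 0" using h[rule_format, of "(1, 0, 0)"] \<open>a = 0\<close> by (simp add: X formL_def B0')
    moreover have "x = 0"
    proof (rule nondeg, rule allI)
      fix y show "BV x y = 0" using h[rule_format, of "(0, y, 0)"] by (simp add: X formL_def)
    qed
    ultimately show ?thesis by (simp add: X zero_prod_def)
  qed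
qed

lemma bijL: "bij (alphaL s al BV x0 lam lam0) \<longleftrightarrow> lam \<noteq> 0"
proof
  assume b: "bij (alphaL s al BV x0 lam lam0)"
  show "lam \<noteq> 0"
  proof
    assume l: "lam = 0"
    from b have "surj (alphaL s al BV x0 lam lam0)" by (rule bij_is_surj)
    then obtain X where "alphaL s al BV x0 lam lam0 X = (1, 0, 0)" by (metis surjD)
    thus False using l by (cases X) (simp add: alphaL_def)
  qed
next
  assume l: "lam \<noteq> 0"
  show "bij (alphaL s al BV x0 lam lam0)"
    unfolding bij_def
  proof
    show "inj (alphaL s al BV x0 lam lam0)"
    proof (rule injI)
      fix X Y assume h: "alphaL s al BV x0 lam lam0 X = alphaL s al BV x0 lam lam0 Y"
      obtain a x b where X: "X = (a, x, b)" by (cases X) auto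
      obtain c y d where Y: "Y = (c, y, d)" by (cases Y) auto
      have ac: "a = c" using h l by (simp add: X Y alphaL_def)
      have "al x = al y" using h by (simp add: X Y alphaL_def ac)
      hence xy: "x = y" by (metis alal)
      have "b = d" using h l by (simp add: X Y alphaL_def ac xy)
      thus "X = Y" using X Y ac xy by simp
    qed
    show "surj (alphaL s al BV x0 lam lam0)"
      unfolding surj_def
    proof (rule allI)
      fix P :: "'a \<times> 'v \<times> 'a"
      obtain p q r where P: "P = (p, q, r)" by (cases P) auto
      define a where "a = p / lam"
      define x where "x = al (q + s a x0)"
      define b where "b = (r - BV x0 x - a * lam0) / lam"
      have ax: "al x + s a x0 = q" by (simp add: x_def alal add.assoc v2)
      have a1: "a * lam = p" using l by (simp add: a_def)
      have b1: "BV x0 x + a * lam0 + b * lam = r" using l by (simp add: b_def)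
      have "alphaL s al BV x0 lam lam0 (a, x, b) = (p, q, r)"
        by (simp add: alphaL_def ax a1 b1)
      thus "\<exists>X. P = alphaL s al BV x0 lam lam0 X" using P by metis
    qed
  qed
qed

lemma invL: "involutive (alphaL s al BV x0 lam lam0) \<longleftrightarrow>
         lam ^ 2 = 1 \<and> al x0 = s lam x0 \<and> BV x0 x0 = 0"
proof
  assume h: "involutive (alphaL s al BV x0 lam lam0)"
  have "alphaL s al BV x0 lam lam0 (alphaL s al BV x0 lam lam0 (1, 0, 0)) = (1, 0, 0)"
    using h unfolding involutive_def by (metis comp_apply id_apply)
  hence e: "lam * lam = 1" "al x0 + s lam x0 = 0" "BV x0 x0 + lam * lam0 + lam0 * lam = 0"
    by (simp_all add: alphaL_def lin al0 s1)
  show "lam ^ 2 = 1 \<and> al x0 = s lam x0 \<and> BV x0 x0 = 0"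
  proof (intro conjI)
    show "lam ^ 2 = 1" using e by (simp add: power2_eq_square)
    show "al x0 = s lam x0" using e(2) by (metis add_eq_0_iff vneg)
    show "BV x0 x0 = 0" using e(3) by (simp add: mult.commute add.assoc a2)
  qed
next
  assume h: "lam ^ 2 = 1 \<and> al x0 = s lam x0 \<and> BV x0 x0 = 0"
  hence ll: "lam * lam = 1" by (simp add: power2_eq_square)
  have ll2: "lam * (lam * u) = u" for u by (metis ll mult.assoc mult_1)
  have bx: "BV x0 (al x) = lam * BV x0 x" for x using h by (metis alB Bs1)
  show "involutive (alphaL s al BV x0 lam lam0)"
    unfolding involutive_def
  proof (rule ext)
    fix X :: "'a \<times> 'v \<times> 'a"
    obtain a x b where X: "X = (a, x, b)" by (cases X) auto
    show "(alphaL s al BV x0 lam lam0 \<circ> alphaL s al BV x0 lam lam0) X = id X"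
      using h by (simp add: X alphaL_def lin alal bx ll ll2 add_ac mult_ac c2s distrib_left)
  qed
qed

end

theorem theorem3p1:
  fixes s :: "'a::field \<Rightarrow> 'v::ab_group_add \<Rightarrow> 'v"
    and br :: "'v \<Rightarrow> 'v \<Rightarrow> 'v" and al :: "'v \<Rightarrow> 'v"
    and BV :: "'v \<Rightarrow> 'v \<Rightarrow> 'a" and D :: "'v \<Rightarrow> 'v"
    and x0 :: 'v and lam lam0 beta :: 'a
  assumes "alg_closed TYPE('a)" and "char2 TYPE('a)"
    and "quadratic_hom_lie s br al BV" and "involutive al"
    and "hom_derivation s br al D" and "D_invariant BV D"
    and "\<forall>y. s lam (D y) + ad br x0 y = D y"
    and "al (D x0) = D x0"
    and "\<forall>y. al (D (D y)) + D (D (al y)) = ad br (D x0) y"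
  shows "quadratic_hom_lie (scaleL s) (bracketL s br BV D) (alphaL s al BV x0 lam lam0) (formL BV beta)
    \<and> (bij (alphaL s al BV x0 lam lam0) \<longleftrightarrow> lam \<noteq> 0)
    \<and> (involutive (alphaL s al BV x0 lam lam0) \<longleftrightarrow>
         lam ^ 2 = 1 \<and> al x0 = s lam x0 \<and> BV x0 x0 = 0)"
proof -
  interpret hsetup s br al BV D x0 lam
    using assms by unfold_locales auto
  show ?thesis using qL bijL invL by blast
qed

end
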